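(* Let $K\subseteq L$ be differential fields and $r\in\mathbb{N}$. Then $K$ is $r$-differentially closed in $L$ if and only if there is no differential subfield $E$ of $L$ with $K\subsetneq E$ and $\operatorname{trdeg}(E|K)\le r$.
   Context: Differential fields have characteristic $0$. $K$ is $r$-differentially closed in $L$ if for every nonzero differential polynomial $P\in K\{Y\}$ of order $\le r$, every zero of $P$ in $L$ lies in $K$. $\operatorname{trdeg}$ denotes transcendence degree of field extensions. *)

theory Defs
  imports Main "HOL-Library.Extended_Nat"
begin

text \<open>The ambient differential field L is the type 'a (characteristic 0),
  with derivation D. Subfields are subsets of 'a.\<close>

definition derivation :: "('a::field_char_0 \<Rightarrow> 'a) \<Rightarrow> bool" where
  "derivation D \<longleftrightarrow> (\<forall>x y. D (x + y) = D x + D y) \<and> (\<forall>x y. D (x * y) = D x * y + x * D y)"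

definition subfield :: "'a::field set \<Rightarrow> bool" where
  "subfield K \<longleftrightarrow> 0 \<in> K \<and> 1 \<in> K \<and> (\<forall>x\<in>K. \<forall>y\<in>K. x + y \<in> K \<and> x - y \<in> K \<and> x * y \<in> K)
     \<and> (\<forall>x\<in>K. x \<noteq> 0 \<longrightarrow> inverse x \<in> K)"

definition diff_subfield :: "('a::field_char_0 \<Rightarrow> 'a) \<Rightarrow> 'a set \<Rightarrow> bool" where
  "diff_subfield D K \<longleftrightarrow> subfield K \<and> (\<forall>x\<in>K. D x \<in> K)"

text \<open>Multivariate polynomials in variables X_0,...,X_{n-1}, given by their coefficient
  function on exponent vectors (nat \<Rightarrow> nat).\<close>

definition is_mpoly :: "'a::field set \<Rightarrow> nat \<Rightarrow> ((nat \<Rightarrow> nat) \<Rightarrow> 'a) \<Rightarrow> bool" where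
  "is_mpoly K n c \<longleftrightarrow> finite {\<alpha>. c \<alpha> \<noteq> 0} \<and>
     (\<forall>\<alpha>. c \<alpha> \<noteq> 0 \<longrightarrow> c \<alpha> \<in> K \<and> (\<forall>i\<ge>n. \<alpha> i = 0))"

definition mpoly_nonzero :: "((nat \<Rightarrow> nat) \<Rightarrow> 'a::field) \<Rightarrow> bool" where
  "mpoly_nonzero c \<longleftrightarrow> (\<exists>\<alpha>. c \<alpha> \<noteq> 0)"

definition mpeval :: "nat \<Rightarrow> ((nat \<Rightarrow> nat) \<Rightarrow> 'a::field) \<Rightarrow> (nat \<Rightarrow> 'a) \<Rightarrow> 'a" where
  "mpeval n c x = (\<Sum>\<alpha>\<in>{\<alpha>. c \<alpha> \<noteq> 0}. c \<alpha> * (\<Prod>i<n. x i ^ \<alpha> i))"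

text \<open>K is r-differentially closed in L: every zero in L of a nonzero differential polynomial
  P(Y, Y', ..., Y^(r)) with coefficients in K lies in K.\<close>

definition r_diff_closed :: "('a::field_char_0 \<Rightarrow> 'a) \<Rightarrow> nat \<Rightarrow> 'a set \<Rightarrow> bool" where
  "r_diff_closed D r K \<longleftrightarrow>
     (\<forall>c y. is_mpoly K (Suc r) c \<and> mpoly_nonzero c \<and> mpeval (Suc r) c (\<lambda>i. (D ^^ i) y) = 0
        \<longrightarrow> y \<in> K)"

definition alg_indep :: "'a::field set \<Rightarrow> 'a list \<Rightarrow> bool" where
  "alg_indep K xs \<longleftrightarrow> distinct xs \<and>
     (\<forall>c. is_mpoly K (length xs) c \<and> mpoly_nonzero c \<longrightarrow> mpeval (length xs) c (\<lambda>i. xs ! i) \<noteq> 0)"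

definition trdeg :: "'a::field set \<Rightarrow> 'a set \<Rightarrow> enat" where
  "trdeg K E = Sup {enat (length xs) | xs. set xs \<subseteq> E \<and> alg_indep K xs}"

end

theory Submission
  imports Defs "HOL-Library.FuncSet"
begin


lemma sf_0: "subfield K \<Longrightarrow> 0 \<in> K" by (simp add: subfield_def)
lemma sf_1: "subfield K \<Longrightarrow> 1 \<in> K" by (simp add: subfield_def)
lemma sf_add: "subfield K \<Longrightarrow> x \<in> K \<Longrightarrow> y \<in> K \<Longrightarrow> x + y \<in> K" by (simp add: subfield_def)
lemma sf_diff: "subfield K \<Longrightarrow> x \<in> K \<Longrightarrow> y \<in> K \<Longrightarrow> x - y \<in> K" by (simp add: subfield_def)
lemma sf_mult: "subfield K \<Longrightarrow> x \<in> K \<Longrightarrow> y \<in> K \<Longrightarrow> x * y \<in> K" by (simp add: subfield_def)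
lemma sf_uminus: "subfield K \<Longrightarrow> x \<in> K \<Longrightarrow> - x \<in> K"
  using sf_diff[of K 0 x] sf_0[of K] by simp
lemma sf_inverse: "subfield (K::'a::field set) \<Longrightarrow> x \<in> K \<Longrightarrow> inverse x \<in> K"
  by (cases "x = 0") (auto simp: subfield_def)
lemma sf_divide: "subfield (K::'a::field set) \<Longrightarrow> x \<in> K \<Longrightarrow> y \<in> K \<Longrightarrow> x / y \<in> K"
  by (simp add: divide_inverse sf_mult sf_inverse)
lemma sf_sum: "subfield K \<Longrightarrow> (\<And>i. i \<in> A \<Longrightarrow> f i \<in> K) \<Longrightarrow> sum f A \<in> K"
  by (induction A rule: infinite_finite_induct) (auto simp: sf_0 sf_add)
lemma sf_prod: "subfield K \<Longrightarrow> (\<And>i. i \<in> A \<Longrightarrow> f i \<in> K) \<Longrightarrow> prod f A \<in> K"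
  by (induction A rule: infinite_finite_induct) (auto simp: sf_1 sf_mult)
lemma sf_of_nat: "subfield K \<Longrightarrow> of_nat n \<in> K"
  by (induction n) (auto simp: sf_0 sf_1 sf_add)
lemma sf_power: "subfield K \<Longrightarrow> x \<in> K \<Longrightarrow> x ^ n \<in> K"
  by (induction n) (auto simp: sf_1 sf_mult)

inductive_set spn :: "'a::field set \<Rightarrow> 'a set \<Rightarrow> 'a set" for K S where
  spn_zero: "0 \<in> spn K S"
| spn_base: "s \<in> S \<Longrightarrow> s \<in> spn K S"
| spn_add: "x \<in> spn K S \<Longrightarrow> y \<in> spn K S \<Longrightarrow> x + y \<in> spn K S"
| spn_smult: "k \<in> K \<Longrightarrow> x \<in> spn K S \<Longrightarrow> k * x \<in> spn K S"

lemma spn_mult_closed: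
  assumes "\<And>h. h \<in> H \<Longrightarrow> t * h \<in> spn K C" and "x \<in> spn K H"
  shows "t * x \<in> spn K C"
  using assms(2)
proof induction
  case spn_zero then show ?case by (simp add: spn.spn_zero)
next
  case (spn_base s) then show ?case using assms(1) by blast
next
  case (spn_add x y) then show ?case by (simp add: distrib_left spn.spn_add)
next
  case (spn_smult k x)
  have e: "t * (k * x) = k * (t * x)" by (simp add: ac_simps)
  show ?case unfolding e by (rule spn.spn_smult) (use spn_smult in auto)
qed

lemma spn_subset:
  assumes "\<And>h. h \<in> H \<Longrightarrow> h \<in> spn K C" and "x \<in> spn K H"
  shows "x \<in> spn K C"
  using spn_mult_closed[of H 1 K C x] assms by simp

lemma spn_mono: "H \<subseteq> C \<Longrightarrow> x \<in> spn K H \<Longrightarrow> x \<in> spn K C"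
  by (rule spn_subset[of H]) (auto intro: spn_base)

lemma spn_prod2:
  assumes "\<And>a b. a \<in> A \<Longrightarrow> b \<in> B \<Longrightarrow> a * b \<in> C" and "x \<in> spn K A" and "y \<in> spn K B"
  shows "x * y \<in> spn K C"
  using assms(2)
proof induction
  case spn_zero then show ?case by (simp add: spn.spn_zero)
next
  case (spn_base s)
  show ?case by (rule spn_mult_closed[OF _ assms(3)]) (use spn_base in \<open>auto intro: spn.spn_base assms(1)\<close>)
next
  case (spn_add x1 x2) then show ?case by (simp add: distrib_right spn.spn_add)
next
  case (spn_smult k x)
  have e: "k * x * y = k * (x * y)" by (simp add: ac_simps)
  show ?case unfolding e by (rule spn.spn_smult) (use spn_smult in auto)
qed

lemma spn_uminus: "subfield K \<Longrightarrow> x \<in> spn K S \<Longrightarrow> - x \<in> spn K S"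
proof -
  assume a: "subfield K" "x \<in> spn K S"
  have "- 1 \<in> K" using sf_uminus[OF a(1) sf_1[OF a(1)]] .
  from spn_smult[OF this a(2)] show ?thesis by simp
qed

lemma spn_diff: "subfield K \<Longrightarrow> x \<in> spn K S \<Longrightarrow> y \<in> spn K S \<Longrightarrow> x - y \<in> spn K S"
  using spn_add[OF _ spn_uminus] by (metis diff_conv_add_uminus)

lemma spn_sum: "(\<And>i. i \<in> A \<Longrightarrow> f i \<in> spn K S) \<Longrightarrow> sum f A \<in> spn K S"
  by (induction A rule: infinite_finite_induct) (auto intro: spn_zero spn_add)

lemma spn_empty: "x \<in> spn K {} \<Longrightarrow> x = 0"
  by (induction rule: spn.induct) auto

lemma spn_insert_decomp:
  assumes sf: "subfield K" and "x \<in> spn K (insert b B)"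
  shows "\<exists>l\<in>K. x - l * b \<in> spn K B"
  using assms(2)
proof induction
  case spn_zero then show ?case using sf_0[OF sf] by (auto intro!: bexI[of _ 0] spn.spn_zero)
next
  case (spn_base s)
  then show ?case
  proof
    assume "s = b" then show ?thesis using sf_1[OF sf] by (auto intro!: bexI[of _ 1] spn.spn_zero)
  next
    assume "s \<in> B" then show ?thesis using sf_0[OF sf] by (auto intro!: bexI[of _ 0] spn.spn_base)
  qed
next
  case (spn_add x y)
  then obtain l1 l2 where "l1 \<in> K" "x - l1 * b \<in> spn K B" "l2 \<in> K" "y - l2 * b \<in> spn K B" by blast
  then show ?case
    by (intro bexI[of _ "l1 + l2"]) (auto simp: sf_add[OF sf] algebra_simps dest: spn.spn_add)
next
  case (spn_smult k x)
  then obtain l where "l \<in> K" "x - l * b \<in> spn K B" by blast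
  with spn_smult(1) have "k * (x - l * b) \<in> spn K B" by (simp add: spn.spn_smult)
  then show ?case using \<open>l \<in> K\<close> spn_smult(1)
    by (intro bexI[of _ "k * l"]) (auto simp: sf_mult[OF sf] algebra_simps)
qed

lemma steinitz:
  assumes sf: "subfield K" and fB: "finite B"
  shows "finite I \<Longrightarrow> card B < card I \<Longrightarrow> (\<And>i. i \<in> I \<Longrightarrow> w i \<in> spn K B) \<Longrightarrow>
    \<exists>c. (\<forall>i\<in>I. c i \<in> K) \<and> (\<exists>i\<in>I. c i \<noteq> 0) \<and> (\<Sum>i\<in>I. c i * w i) = 0"
  using fB
proof (induction B arbitrary: I w rule: finite_induct)
  case empty
  then have "I \<noteq> {}" by auto
  then obtain i0 where "i0 \<in> I" by auto
  have "\<And>i. i \<in> I \<Longrightarrow> w i = 0" using empty by (auto dest: spn_empty)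
  then show ?case using \<open>i0 \<in> I\<close> sf_1[OF sf] by (intro exI[of _ "\<lambda>_. 1"]) auto
next
  case (insert b B I w)
  have "\<forall>i\<in>I. \<exists>l\<in>K. w i - l * b \<in> spn K B" using insert.prems(3) spn_insert_decomp[OF sf] by blast
  then obtain lam where lam: "\<And>i. i \<in> I \<Longrightarrow> lam i \<in> K" "\<And>i. i \<in> I \<Longrightarrow> w i - lam i * b \<in> spn K B"
    by metis
  have cB: "card (insert b B) = Suc (card B)" using insert by simp
  show ?case
  proof (cases "\<forall>i\<in>I. lam i = 0")
    case True
    then have "\<And>i. i \<in> I \<Longrightarrow> w i \<in> spn K B" using lam by auto
    then show ?thesis using insert.IH[of I w] insert.prems cB by auto
  next
    case False
    then obtain i0 where i0: "i0 \<in> I" "lam i0 \<noteq> 0" by auto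
    define I' where "I' = I - {i0}"
    define w' where "w' i = w i - (lam i / lam i0) * w i0" for i
    have w': "w' i \<in> spn K B" if "i \<in> I'" for i
    proof -
      have "w' i = (w i - lam i * b) - (lam i / lam i0) * (w i0 - lam i0 * b)"
        using i0 by (simp add: w'_def algebra_simps)
      moreover have "(lam i / lam i0) * (w i0 - lam i0 * b) \<in> spn K B"
        using lam i0 that I'_def by (intro spn_smult sf_divide[OF sf]) auto
      ultimately show ?thesis using lam that I'_def by (auto intro: spn_diff[OF sf])
    qed
    have "finite I'" "card B < card I'" using insert.prems cB i0 by (auto simp: I'_def)
    then obtain c' where c': "\<forall>i\<in>I'. c' i \<in> K" "\<exists>i\<in>I'. c' i \<noteq> 0" "(\<Sum>i\<in>I'. c' i * w' i) = 0"
      using insert.IH[of I' w'] w' by blast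
    define c where "c i = (if i = i0 then - (\<Sum>j\<in>I'. c' j * (lam j / lam i0)) else c' i)" for i
    have cK: "\<forall>i\<in>I. c i \<in> K"
      using c'(1) lam i0 by (auto simp: c_def I'_def intro!: sf_uminus[OF sf] sf_sum[OF sf] sf_mult[OF sf] sf_divide[OF sf])
    have cnz: "\<exists>i\<in>I. c i \<noteq> 0" using c'(2) by (auto simp: c_def I'_def)
    have "(\<Sum>i\<in>I. c i * w i) = c i0 * w i0 + (\<Sum>i\<in>I'. c i * w i)"
      using i0 insert.prems(1) by (simp add: I'_def sum.remove)
    also have "(\<Sum>i\<in>I'. c i * w i) = (\<Sum>i\<in>I'. c' i * w' i + (c' i * (lam i / lam i0)) * w i0)"
      by (rule sum.cong) (auto simp: c_def I'_def w'_def algebra_simps)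
    also have "\<dots> = (\<Sum>i\<in>I'. c' i * w' i) + (\<Sum>i\<in>I'. c' i * (lam i / lam i0)) * w i0"
      by (simp add: sum.distrib sum_distrib_right)
    finally show ?thesis using c'(3) cK cnz by (intro exI[of _ c]) (simp add: c_def)
  qed
qed



lemma der_add: "derivation D \<Longrightarrow> D (x + y) = D x + D y" by (simp add: derivation_def)
lemma der_mult: "derivation D \<Longrightarrow> D (x * y) = D x * y + x * D y" by (simp add: derivation_def)
lemma der_0: "derivation D \<Longrightarrow> D 0 = 0"
  using der_add[of D 0 0] by simp
lemma der_1: "derivation D \<Longrightarrow> D 1 = 0"
  using der_mult[of D 1 1] by simp
lemma der_uminus: "derivation D \<Longrightarrow> D (- x) = - D x"
  using der_add[of D x "-x"] der_0[of D] by (metis add.commute eq_neg_iff_add_eq_0 add.right_inverse)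
lemma der_diff: "derivation D \<Longrightarrow> D (x - y) = D x - D y"
  using der_add[of D x "-y"] der_uminus[of D y] by simp
lemma der_sum: "derivation D \<Longrightarrow> D (sum f A) = (\<Sum>a\<in>A. D (f a))"
  by (induction A rule: infinite_finite_induct) (auto simp: der_0 der_add)
lemma der_power: "derivation D \<Longrightarrow> D (x ^ n) = of_nat n * x ^ (n - 1) * D x"
proof (induction n)
  case 0 then show ?case by (simp add: der_1)
next
  case (Suc n)
  have "D (x ^ Suc n) = D x * x ^ n + x * D (x ^ n)" using der_mult[OF Suc.prems] by simp
  also have "\<dots> = of_nat (Suc n) * x ^ n * D x"
    using Suc by (cases n) (auto simp: algebra_simps)
  finally show ?case by simp
qed
lemma der_divide:
  assumes "derivation D" "q \<noteq> 0"
  shows "D (p / q) = (D p * q - p * D q) / (q * q)"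
proof -
  have "p = (p / q) * q" using assms by simp
  then have "D p = D (p / q) * q + (p / q) * D q" using der_mult[OF assms(1)] by metis
  then show ?thesis using assms(2) by (simp add: field_simps)
qed

locale dsetup =
  fixes D :: "'a::field_char_0 \<Rightarrow> 'a" and K :: "'a set" and y :: 'a and m g :: nat
    and P :: "(nat \<Rightarrow> nat) \<Rightarrow> 'a"
  assumes der: "derivation D" and dK: "diff_subfield D K"
    and P: "is_mpoly K (Suc m) P" and Pzero: "mpeval (Suc m) P (\<lambda>i. (D^^i) y) = 0"
    and Pdeg: "\<And>\<alpha>. P \<alpha> \<noteq> 0 \<Longrightarrow> \<alpha> m \<le> g"
    and lead: "\<exists>\<alpha>. P \<alpha> \<noteq> 0 \<and> \<alpha> m = g"
    and gpos: "1 \<le> g"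
    and minimal: "\<And>c. is_mpoly K (Suc m) c \<Longrightarrow> mpoly_nonzero c \<Longrightarrow> (\<forall>\<alpha>. c \<alpha> \<noteq> 0 \<longrightarrow> \<alpha> m < g)
       \<Longrightarrow> mpeval (Suc m) c (\<lambda>i. (D^^i) y) \<noteq> 0"
begin

definition u :: "nat \<Rightarrow> 'a" where "u i = (D^^i) y"

lemma Du: "D (u i) = u (Suc i)" by (simp add: u_def)

lemma sfK: "subfield K" using dK by (simp add: diff_subfield_def)
lemma DK: "k \<in> K \<Longrightarrow> D k \<in> K" using dK by (simp add: diff_subfield_def)

definition mono :: "nat \<Rightarrow> (nat \<Rightarrow> nat) \<Rightarrow> 'a" where "mono n f = (\<Prod>i<n. u i ^ f i)"

lemma mono_cong: "(\<And>i. i < n \<Longrightarrow> f i = f' i) \<Longrightarrow> mono n f = mono n f'"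
  unfolding mono_def by (rule prod.cong) auto

lemma mono_Suc: "mono (Suc n) f = mono n f * u n ^ f n" by (simp add: mono_def)

lemma mono_add: "mono n (\<lambda>i. f i + f' i) = mono n f * mono n f'"
  by (simp add: mono_def power_add prod.distrib)

lemma mono_zero: "mono n (\<lambda>_. 0) = 1" by (simp add: mono_def)

inductive_set R :: "'a set" where
  R_K: "k \<in> K \<Longrightarrow> k \<in> R"
| R_u: "i \<le> m \<Longrightarrow> u i \<in> R"
| R_add: "a \<in> R \<Longrightarrow> b \<in> R \<Longrightarrow> a + b \<in> R"
| R_mult: "a \<in> R \<Longrightarrow> b \<in> R \<Longrightarrow> a * b \<in> R"
| R_uminus: "a \<in> R \<Longrightarrow> - a \<in> R"

lemma R_0: "0 \<in> R" by (rule R_K) (simp add: sf_0 sfK)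
lemma R_1: "1 \<in> R" by (rule R_K) (simp add: sf_1 sfK)
lemma R_diff: "a \<in> R \<Longrightarrow> b \<in> R \<Longrightarrow> a - b \<in> R"
  by (metis R_add R_uminus diff_conv_add_uminus)
lemma R_sum: "(\<And>i. i \<in> A \<Longrightarrow> f i \<in> R) \<Longrightarrow> sum f A \<in> R"
  by (induction A rule: infinite_finite_induct) (auto intro: R_0 R_add)
lemma R_prod: "(\<And>i. i \<in> A \<Longrightarrow> f i \<in> R) \<Longrightarrow> prod f A \<in> R"
  by (induction A rule: infinite_finite_induct) (auto intro: R_1 R_mult)
lemma R_power: "a \<in> R \<Longrightarrow> a ^ n \<in> R"
  by (induction n) (auto intro: R_1 R_mult)
lemma R_of_nat: "of_nat n \<in> R" by (rule R_K) (simp add: sf_of_nat sfK)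
lemma R_mono: "n \<le> Suc m \<Longrightarrow> mono n f \<in> R"
  unfolding mono_def by (rule R_prod) (auto intro!: R_power R_u)

definition E :: "'a set" where "E = {p / q | p q. p \<in> R \<and> q \<in> R \<and> q \<noteq> 0}"

lemma E_I: "p \<in> R \<Longrightarrow> q \<in> R \<Longrightarrow> q \<noteq> 0 \<Longrightarrow> p / q \<in> E" unfolding E_def by blast
lemma R_E: "a \<in> R \<Longrightarrow> a \<in> E" using E_I[of a 1] R_1 by simp

lemma subfield_E: "subfield E"
  unfolding subfield_def
proof (intro conjI ballI impI)
  show "0 \<in> E" "1 \<in> E" using R_E R_0 R_1 by auto
  fix x z assume "x \<in> E" "z \<in> E"
  then obtain p1 q1 p2 q2 where e: "x = p1 / q1" "z = p2 / q2" "p1 \<in> R" "q1 \<in> R" "p2 \<in> R" "q2 \<in> R"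
    "q1 \<noteq> 0" "q2 \<noteq> 0" unfolding E_def by blast
  have "x + z = (p1 * q2 + p2 * q1) / (q1 * q2)" using e by (simp add: field_simps)
  then show "x + z \<in> E" using e by (auto intro!: E_I R_add R_mult)
  have "x - z = (p1 * q2 - p2 * q1) / (q1 * q2)" using e by (simp add: field_simps)
  then show "x - z \<in> E" using e by (auto intro!: E_I R_diff R_mult)
  have "x * z = (p1 * p2) / (q1 * q2)" using e by (simp add: field_simps)
  then show "x * z \<in> E" using e by (auto intro!: E_I R_mult)
next
  fix x assume "x \<in> E" "x \<noteq> 0"
  then obtain p1 q1 where e: "x = p1 / q1" "p1 \<in> R" "q1 \<in> R" "q1 \<noteq> 0" unfolding E_def by blast
  then have "p1 \<noteq> 0" using \<open>x \<noteq> 0\<close> by auto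
  have "inverse x = q1 / p1" using e by simp
  then show "inverse x \<in> E" using e \<open>p1 \<noteq> 0\<close> by (auto intro!: E_I)
qed

lemma E_add: "a \<in> E \<Longrightarrow> b \<in> E \<Longrightarrow> a + b \<in> E" using subfield_E by (simp add: subfield_def)
lemma E_mult: "a \<in> E \<Longrightarrow> b \<in> E \<Longrightarrow> a * b \<in> E" using subfield_E by (simp add: subfield_def)
lemma E_diff: "a \<in> E \<Longrightarrow> b \<in> E \<Longrightarrow> a - b \<in> E" using subfield_E by (simp add: subfield_def)
lemma E_divide: "a \<in> E \<Longrightarrow> b \<in> E \<Longrightarrow> a / b \<in> E" using subfield_E sf_divide by blast

lemma D_mono_R: "n \<le> m \<Longrightarrow> D (mono n f) \<in> R"
proof (induction n)
  case 0 then show ?case by (simp add: mono_def der_1[OF der] R_0)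
next
  case (Suc n)
  have "D (mono (Suc n) f) = D (mono n f) * u n ^ f n + mono n f * (of_nat (f n) * u n ^ (f n - 1) * u (Suc n))"
    by (simp add: mono_Suc der_mult[OF der] der_power[OF der] Du)
  then show ?case using Suc by (auto intro!: R_add R_mult R_power R_u R_mono R_of_nat)
qed

definition S0 where "S0 = {\<alpha>. P \<alpha> \<noteq> 0}"
lemma finS0: "finite S0" using P by (simp add: is_mpoly_def S0_def)
lemma PK: "P \<alpha> \<in> K" using P sf_0[OF sfK] by (cases "P \<alpha> = 0") (auto simp: is_mpoly_def)
lemma Pvars: "P \<alpha> \<noteq> 0 \<Longrightarrow> i \<ge> Suc m \<Longrightarrow> \<alpha> i = 0" using P by (simp add: is_mpoly_def)

lemma mpeval_u: "mpeval (Suc m) c u = (\<Sum>\<alpha>\<in>{\<alpha>. c \<alpha> \<noteq> 0}. c \<alpha> * (mono m \<alpha> * u m ^ \<alpha> m))"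
  by (simp add: mpeval_def mono_def)

lemma minimal_u: "is_mpoly K (Suc m) c \<Longrightarrow> mpoly_nonzero c \<Longrightarrow> (\<forall>\<alpha>. c \<alpha> \<noteq> 0 \<longrightarrow> \<alpha> m < g)
       \<Longrightarrow> mpeval (Suc m) c u \<noteq> 0"
  using minimal unfolding u_def[abs_def] by blast

definition Sp :: "(nat \<Rightarrow> nat) \<Rightarrow> 'a" where "Sp \<beta> = of_nat (Suc (\<beta> m)) * P (\<beta>(m := Suc (\<beta> m)))"

lemma Sp_nz: "Sp \<beta> \<noteq> 0 \<longleftrightarrow> P (\<beta>(m := Suc (\<beta> m))) \<noteq> 0"
  by (simp add: Sp_def del: of_nat_Suc)

lemma Sp_poly: "is_mpoly K (Suc m) Sp"
  unfolding is_mpoly_def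
proof (intro conjI allI impI)
  have "{\<beta>. Sp \<beta> \<noteq> 0} \<subseteq> (\<lambda>\<alpha>. \<alpha>(m := \<alpha> m - 1)) ` S0"
  proof
    fix \<beta> assume "\<beta> \<in> {\<beta>. Sp \<beta> \<noteq> 0}"
    then have "\<beta>(m := Suc (\<beta> m)) \<in> S0" by (simp add: Sp_nz S0_def)
    moreover have "\<beta> = (\<lambda>\<alpha>. \<alpha>(m := \<alpha> m - 1)) (\<beta>(m := Suc (\<beta> m)))" by (auto simp: fun_eq_iff)
    ultimately show "\<beta> \<in> (\<lambda>\<alpha>. \<alpha>(m := \<alpha> m - 1)) ` S0" by blast
  qed
  then show "finite {\<beta>. Sp \<beta> \<noteq> 0}" using finS0 by (rule finite_subset[OF _ finite_imageI])
  fix \<beta> assume "Sp \<beta> \<noteq> 0"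
  show "Sp \<beta> \<in> K" unfolding Sp_def by (intro sf_mult[OF sfK] sf_of_nat[OF sfK] PK)
  fix i assume "Suc m \<le> i"
  then show "\<beta> i = 0" using Pvars[of "\<beta>(m := Suc (\<beta> m))" i] \<open>Sp \<beta> \<noteq> 0\<close> by (simp add: Sp_nz)
qed

lemma Sp_nonzero: "mpoly_nonzero Sp"
proof -
  obtain \<alpha> where a: "P \<alpha> \<noteq> 0" "\<alpha> m = g" using lead by blast
  define \<beta> where "\<beta> = \<alpha>(m := g - 1)"
  have "\<beta>(m := Suc (\<beta> m)) = \<alpha>" using a gpos by (auto simp: \<beta>_def fun_eq_iff)
  then have "Sp \<beta> \<noteq> 0" using a by (simp add: Sp_nz)
  then show ?thesis by (auto simp: mpoly_nonzero_def)
qed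

lemma Sp_deg: "Sp \<beta> \<noteq> 0 \<Longrightarrow> \<beta> m < g"
  using Pdeg[of "\<beta>(m := Suc (\<beta> m))"] by (simp add: Sp_nz)

lemma Sep_eq: "(\<Sum>\<alpha>\<in>S0. P \<alpha> * of_nat (\<alpha> m) * mono m \<alpha> * u m ^ (\<alpha> m - 1)) = mpeval (Suc m) Sp u"
proof -
  have "(\<Sum>\<alpha>\<in>S0. P \<alpha> * of_nat (\<alpha> m) * mono m \<alpha> * u m ^ (\<alpha> m - 1))
      = (\<Sum>\<alpha>\<in>{\<alpha>\<in>S0. \<alpha> m \<noteq> 0}. P \<alpha> * of_nat (\<alpha> m) * mono m \<alpha> * u m ^ (\<alpha> m - 1))"
    by (rule sum.mono_neutral_right) (auto simp: finS0)
  also have "\<dots> = (\<Sum>\<beta>\<in>{\<beta>. Sp \<beta> \<noteq> 0}. Sp \<beta> * (mono m \<beta> * u m ^ \<beta> m))"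
  proof (rule sum.reindex_bij_witness[where i = "\<lambda>\<beta>. \<beta>(m := Suc (\<beta> m))" and j = "\<lambda>\<alpha>. \<alpha>(m := \<alpha> m - 1)"])
    fix \<alpha> assume a: "\<alpha> \<in> {\<alpha>\<in>S0. \<alpha> m \<noteq> 0}"
    then show "(\<alpha>(m := \<alpha> m - 1))(m := Suc ((\<alpha>(m := \<alpha> m - 1)) m)) = \<alpha>" by (auto simp: fun_eq_iff)
    then show "\<alpha>(m := \<alpha> m - 1) \<in> {\<beta>. Sp \<beta> \<noteq> 0}" using a by (simp add: Sp_nz S0_def)
    have "mono m (\<alpha>(m := \<alpha> m - 1)) = mono m \<alpha>" by (rule mono_cong) auto
    then show "Sp (\<alpha>(m := \<alpha> m - 1)) * (mono m (\<alpha>(m := \<alpha> m - 1)) * u m ^ (\<alpha>(m := \<alpha> m - 1)) m)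
       = P \<alpha> * of_nat (\<alpha> m) * mono m \<alpha> * u m ^ (\<alpha> m - 1)"
      using a by (simp add: Sp_def)
  next
    fix \<beta> assume b: "\<beta> \<in> {\<beta>. Sp \<beta> \<noteq> 0}"
    show "(\<beta>(m := Suc (\<beta> m)))(m := (\<beta>(m := Suc (\<beta> m))) m - 1) = \<beta>" by (auto simp: fun_eq_iff)
    show "\<beta>(m := Suc (\<beta> m)) \<in> {\<alpha>\<in>S0. \<alpha> m \<noteq> 0}" using b by (simp add: Sp_nz S0_def)
  qed
  also have "\<dots> = mpeval (Suc m) Sp u" by (simp add: mpeval_u)
  finally show ?thesis .
qed

lemma Sep_nz: "mpeval (Suc m) Sp u \<noteq> 0"
  using minimal_u[OF Sp_poly Sp_nonzero] Sp_deg by blast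

lemma P_u: "mpeval (Suc m) P u = 0" using Pzero unfolding u_def[abs_def] .

lemma u_Suc_m: "u (Suc m) \<in> E"
proof -
  define X where "X = (\<Sum>\<alpha>\<in>S0. D (P \<alpha>) * (mono m \<alpha> * u m ^ \<alpha> m) + P \<alpha> * (D (mono m \<alpha>) * u m ^ \<alpha> m))"
  define Sep where "Sep = (\<Sum>\<alpha>\<in>S0. P \<alpha> * of_nat (\<alpha> m) * mono m \<alpha> * u m ^ (\<alpha> m - 1))"
  have "0 = D (mpeval (Suc m) P u)" using P_u der_0[OF der] by simp
  also have "\<dots> = (\<Sum>\<alpha>\<in>S0. D (P \<alpha> * (mono m \<alpha> * u m ^ \<alpha> m)))"
    by (simp add: mpeval_u der_sum[OF der] S0_def)
  also have "\<dots> = (\<Sum>\<alpha>\<in>S0. (D (P \<alpha>) * (mono m \<alpha> * u m ^ \<alpha> m) + P \<alpha> * (D (mono m \<alpha>) * u m ^ \<alpha> m))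
       + u (Suc m) * (P \<alpha> * of_nat (\<alpha> m) * mono m \<alpha> * u m ^ (\<alpha> m - 1)))"
    by (rule sum.cong) (auto simp: der_mult[OF der] der_power[OF der] Du algebra_simps)
  also have "\<dots> = X + u (Suc m) * Sep"
    by (simp add: X_def Sep_def sum.distrib sum_distrib_left)
  finally have eq: "X + u (Suc m) * Sep = 0" by simp
  have XR: "X \<in> R" unfolding X_def
    by (intro R_sum R_add R_mult R_K DK PK D_mono_R R_mono R_power R_u) auto
  have SR: "Sep \<in> R" unfolding Sep_def
    by (intro R_sum R_mult R_K PK R_mono R_power R_u R_of_nat) auto
  have Snz: "Sep \<noteq> 0" using Sep_nz Sep_eq Sep_def by simp
  have "u (Suc m) = (- X) / Sep" using eq Snz by (simp add: field_simps eq_neg_iff_add_eq_0)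
  then show ?thesis using E_I[OF R_uminus[OF XR] SR Snz] by simp
qed

lemma D_R: "a \<in> R \<Longrightarrow> D a \<in> E"
proof (induction rule: R.induct)
  case (R_K k) then show ?case by (intro R_E R.R_K DK)
next
  case (R_u i)
  then show ?case
  proof (cases "i = m")
    case True then show ?thesis using u_Suc_m by (simp add: Du)
  next
    case False then show ?thesis using R_u by (simp add: Du R_E R.R_u)
  qed
next
  case (R_add a b) then show ?case by (simp add: der_add[OF der] E_add)
next
  case (R_mult a b) then show ?case by (simp add: der_mult[OF der] E_add E_mult R_E)
next
  case (R_uminus a) then show ?case using E_diff[of 0 "D a"] subfield_E by (simp add: der_uminus[OF der] sf_0)
qed

lemma D_E: "x \<in> E \<Longrightarrow> D x \<in> E"
proof -
  assume "x \<in> E"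
  then obtain p q where e: "x = p / q" "p \<in> R" "q \<in> R" "q \<noteq> 0" unfolding E_def by blast
  then have "D x = (D p * q - p * D q) / (q * q)" by (simp add: der_divide[OF der])
  moreover have "p \<in> E" "q \<in> E" "D p \<in> E" "D q \<in> E" using e by (auto intro: R_E D_R)
  ultimately show ?thesis by (auto intro!: E_divide E_diff E_mult)
qed

lemma diff_subfield_E: "diff_subfield D E" using subfield_E D_E by (simp add: diff_subfield_def)
lemma K_E: "K \<subseteq> E" using R_E R_K by blast
lemma y_E: "y \<in> E" using R_E[OF R_u[of 0]] by (simp add: u_def)

end


definition boxn :: "nat \<Rightarrow> nat \<Rightarrow> (nat \<Rightarrow> nat) set" where
  "boxn n M = {\<beta>. (\<forall>i<n. \<beta> i \<le> M) \<and> (\<forall>i\<ge>n. \<beta> i = 0)}"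

lemma card_boxn: "card (boxn n M) = Suc M ^ n" and finite_boxn: "finite (boxn n M)"
proof -
  have b: "bij_betw (\<lambda>\<beta>. restrict \<beta> {..<n}) (boxn n M) (PiE {..<n} (\<lambda>_. {..M}))"
    by (rule bij_betw_byWitness[where f' = "\<lambda>f i. if i < n then f i else 0"])
       (auto simp: boxn_def fun_eq_iff PiE_def extensional_def Pi_def)
  have "card (PiE {..<n} (\<lambda>_. {..M})) = Suc M ^ n" by (simp add: card_PiE)
  then show "card (boxn n M) = Suc M ^ n" using bij_betw_same_card[OF b] by simp
  show "finite (boxn n M)" using bij_betw_finite[OF b] by (simp add: finite_PiE)
qed

lemma boxn_add: "f \<in> boxn n a \<Longrightarrow> f' \<in> boxn n b \<Longrightarrow> (\<lambda>i. f i + f' i) \<in> boxn n (a + b)"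
  by (auto simp: boxn_def intro: add_mono)

lemma boxn_mono: "a \<le> b \<Longrightarrow> f \<in> boxn n a \<Longrightarrow> f \<in> boxn n b"
  by (auto simp: boxn_def)

lemma boxn_0: "(\<lambda>_. 0) \<in> boxn n M" by (simp add: boxn_def)

context dsetup begin

definition H :: "nat \<Rightarrow> 'a set" where
  "H N = {mono m f * u m ^ k | f k. f \<in> boxn m N \<and> k \<le> N}"
definition Hp :: "nat \<Rightarrow> 'a set" where
  "Hp N = {mono m f | f. f \<in> boxn m N}"
definition G :: "nat \<Rightarrow> 'a set" where
  "G M = (\<lambda>(f, k). mono m f * u m ^ k) ` (boxn m M \<times> {..<g})"

lemma G_I: "f \<in> boxn m M \<Longrightarrow> k < g \<Longrightarrow> mono m f * u m ^ k \<in> G M"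
  unfolding G_def by (rule image_eqI[of _ _ "(f, k)"]) auto

lemma G_fin: "finite (G M)" unfolding G_def by (simp add: finite_boxn)
lemma G_card: "card (G M) \<le> g * Suc M ^ m"
proof -
  have "card (G M) \<le> card (boxn m M \<times> {..<g})" unfolding G_def by (rule card_image_le) (simp add: finite_boxn)
  also have "\<dots> = g * Suc M ^ m" by (simp add: card_cartesian_product card_boxn)
  finally show ?thesis .
qed

lemma H_mono: "N \<le> N' \<Longrightarrow> H N \<subseteq> H N'"
  unfolding H_def using boxn_mono le_trans by blast

lemma spnH_mono: "N \<le> N' \<Longrightarrow> x \<in> spn K (H N) \<Longrightarrow> x \<in> spn K (H N')"
  using spn_mono H_mono by blast

lemma H_mult: "a \<in> H N1 \<Longrightarrow> b \<in> H N2 \<Longrightarrow> a * b \<in> H (N1 + N2)"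
proof -
  assume "a \<in> H N1" "b \<in> H N2"
  then obtain f1 k1 f2 k2 where e: "a = mono m f1 * u m ^ k1" "f1 \<in> boxn m N1" "k1 \<le> N1"
    "b = mono m f2 * u m ^ k2" "f2 \<in> boxn m N2" "k2 \<le> N2" unfolding H_def by blast
  have "a * b = mono m (\<lambda>i. f1 i + f2 i) * u m ^ (k1 + k2)"
    using e by (simp add: mono_add power_add algebra_simps)
  then show ?thesis unfolding H_def using e(3,6) boxn_add[OF e(2) e(5)]
    by (intro CollectI exI[of _ "\<lambda>i. f1 i + f2 i"] exI[of _ "k1 + k2"]) auto
qed

lemma H_I: "f \<in> boxn m N \<Longrightarrow> k \<le> N \<Longrightarrow> mono m f * u m ^ k \<in> H N"
  unfolding H_def by blast

lemma one_H: "1 \<in> H N"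
  using H_I[of "\<lambda>_. 0" N 0] boxn_0 mono_zero by simp

lemma spnH_mult: "x \<in> spn K (H N1) \<Longrightarrow> z \<in> spn K (H N2) \<Longrightarrow> x * z \<in> spn K (H (N1 + N2))"
  by (rule spn_prod2[of "H N1" "H N2"]) (auto intro: H_mult)

lemma mono_unit: "i < m \<Longrightarrow> mono m (\<lambda>j. if j = i then 1 else 0) = u i"
  unfolding mono_def by (simp add: if_distrib[of "\<lambda>n. u _ ^ n"] prod.delta cong: if_cong)

lemma R_span: "a \<in> R \<Longrightarrow> \<exists>N. a \<in> spn K (H N)"
proof (induction rule: R.induct)
  case (R_K k)
  have "k * 1 \<in> spn K (H 0)" by (intro spn_smult R_K spn_base one_H)
  then show ?case by auto
next
  case (R_u i)
  show ?case
  proof (cases "i = m")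
    case True
    have "u m \<in> H 1" using H_I[of "\<lambda>_. 0" 1 1] boxn_0 by (simp add: mono_zero)
    then show ?thesis using True by (auto intro: spn_base)
  next
    case False
    then have "i < m" using R_u by simp
    have "u i = mono m (\<lambda>j. if j = i then 1 else 0) * u m ^ 0" using mono_unit[OF \<open>i < m\<close>] by simp
    moreover have "(\<lambda>j. if j = i then 1 else 0) \<in> boxn m 1" using \<open>i < m\<close> by (auto simp: boxn_def)
    ultimately have "u i \<in> H 1" using H_I[of _ 1 0] by simp
    then show ?thesis by (auto intro: spn_base)
  qed
next
  case (R_add a b)
  then obtain N1 N2 where "a \<in> spn K (H N1)" "b \<in> spn K (H N2)" by blast
  then have "a \<in> spn K (H (N1 + N2))" "b \<in> spn K (H (N1 + N2))"
    using spnH_mono[of N1 "N1 + N2" a] spnH_mono[of N2 "N1 + N2" b] by auto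
  then show ?case by (auto intro: spn_add)
next
  case (R_mult a b)
  then show ?case by (auto intro: spnH_mult)
next
  case (R_uminus a)
  then show ?case by (auto intro: spn_uminus sfK)
qed

lemma spnH_power: "x \<in> spn K (H N) \<Longrightarrow> x ^ j \<in> spn K (H (j * N))"
proof (induction j)
  case 0 then show ?case by (simp add: spn_base one_H)
next
  case (Suc j)
  then have "x * x ^ j \<in> spn K (H (N + j * N))" by (intro spnH_mult) auto
  then show ?case by simp
qed

lemma spnH_prod: "finite I \<Longrightarrow> (\<And>i. i \<in> I \<Longrightarrow> x i \<in> spn K (H N)) \<Longrightarrow> prod x I \<in> spn K (H (card I * N))"
proof (induction I rule: finite_induct)
  case empty then show ?case by (simp add: spn_base one_H)
next
  case (insert a I)
  then have "x a * prod x I \<in> spn K (H (N + card I * N))" by (intro spnH_mult) auto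
  then show ?case using insert by simp
qed

lemma Hp_mult: "a \<in> Hp N1 \<Longrightarrow> b \<in> Hp N2 \<Longrightarrow> a * b \<in> Hp (N1 + N2)"
proof -
  assume "a \<in> Hp N1" "b \<in> Hp N2"
  then obtain f1 f2 where e: "a = mono m f1" "f1 \<in> boxn m N1" "b = mono m f2" "f2 \<in> boxn m N2"
    unfolding Hp_def by blast
  have "a * b = mono m (\<lambda>i. f1 i + f2 i)" using e by (simp add: mono_add)
  then show ?thesis unfolding Hp_def using boxn_add[OF e(2) e(4)] by blast
qed

lemma spnHp_power: "x \<in> spn K (Hp N) \<Longrightarrow> x ^ j \<in> spn K (Hp (j * N))"
proof (induction j)
  case 0
  have "1 \<in> Hp 0" unfolding Hp_def using boxn_0 mono_zero by (auto intro!: exI[of _ "\<lambda>_. 0"])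
  then show ?case by (simp add: spn_base)
next
  case (Suc j)
  then have "x * x ^ j \<in> spn K (Hp (N + j * N))" by (intro spn_prod2[of "Hp N" "Hp (j * N)"]) (auto intro: Hp_mult)
  then show ?case by simp
qed

definition e :: nat where "e = (\<Sum>\<alpha>\<in>S0. \<Sum>i<m. \<alpha> i)"
definition Ak :: "nat \<Rightarrow> 'a" where "Ak k = (\<Sum>\<alpha>\<in>{\<alpha>\<in>S0. \<alpha> m = k}. P \<alpha> * mono m \<alpha>)"

lemma Ak_spn: "Ak k \<in> spn K (Hp e)"
  unfolding Ak_def
proof (rule spn_sum)
  fix \<alpha> assume a: "\<alpha> \<in> {\<alpha>\<in>S0. \<alpha> m = k}"
  define t where "t i = (if i < m then \<alpha> i else 0)" for i
  have "mono m \<alpha> = mono m t" by (rule mono_cong) (simp add: t_def)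
  moreover have "t \<in> boxn m e"
  proof -
    have "\<alpha> i \<le> e" if "i < m" for i
    proof -
      have "\<alpha> i \<le> (\<Sum>i<m. \<alpha> i)" using that by (intro member_le_sum) auto
      also have "\<dots> \<le> e" unfolding e_def using a finS0 by (intro member_le_sum) auto
      finally show ?thesis .
    qed
    then show ?thesis by (auto simp: boxn_def t_def)
  qed
  ultimately have "mono m \<alpha> \<in> Hp e" unfolding Hp_def by blast
  then show "P \<alpha> * mono m \<alpha> \<in> spn K (Hp e)" by (intro spn_smult PK spn_base)
qed

lemma P_decomp: "Ak g * u m ^ g = - (\<Sum>k<g. Ak k * u m ^ k)"
proof -
  have "0 = (\<Sum>\<alpha>\<in>S0. P \<alpha> * (mono m \<alpha> * u m ^ \<alpha> m))" using P_u by (simp add: mpeval_u S0_def)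
  also have "\<dots> = (\<Sum>k\<in>{..g}. \<Sum>\<alpha>\<in>{\<alpha>. \<alpha> \<in> S0 \<and> \<alpha> m = k}. P \<alpha> * (mono m \<alpha> * u m ^ \<alpha> m))"
    by (rule sum.group[symmetric]) (auto simp: finS0[unfolded S0_def] S0_def intro: Pdeg)
  also have "\<dots> = (\<Sum>k\<in>{..g}. Ak k * u m ^ k)"
    unfolding Ak_def sum_distrib_right by (rule sum.cong) (auto simp: algebra_simps)
  also have "\<dots> = (\<Sum>k<g. Ak k * u m ^ k) + Ak g * u m ^ g"
    by (simp add: lessThan_Suc_atMost[symmetric])
  finally show ?thesis by (simp add: eq_neg_iff_add_eq_0 add.commute)
qed

definition A :: 'a where "A = Ak g"

definition Pa :: "(nat \<Rightarrow> nat) \<Rightarrow> 'a" where "Pa \<beta> = (if \<beta> m = 0 then P (\<beta>(m := g)) else 0)"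

lemma A_nz: "A \<noteq> 0"
proof -
  have poly: "is_mpoly K (Suc m) Pa"
    unfolding is_mpoly_def
  proof (intro conjI allI impI)
    have "{\<beta>. Pa \<beta> \<noteq> 0} \<subseteq> (\<lambda>\<alpha>. \<alpha>(m := 0)) ` S0"
    proof
      fix \<beta> assume "\<beta> \<in> {\<beta>. Pa \<beta> \<noteq> 0}"
      then have "\<beta>(m := g) \<in> S0" "\<beta> m = 0" by (auto simp: Pa_def S0_def split: if_splits)
      moreover have "\<beta> = (\<beta>(m := g))(m := 0)" using \<open>\<beta> m = 0\<close> by (auto simp: fun_eq_iff)
      ultimately show "\<beta> \<in> (\<lambda>\<alpha>. \<alpha>(m := 0)) ` S0" by blast
    qed
    then show "finite {\<beta>. Pa \<beta> \<noteq> 0}" using finS0 by (rule finite_subset[OF _ finite_imageI])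
    fix \<beta> assume "Pa \<beta> \<noteq> 0"
    show "Pa \<beta> \<in> K" by (simp add: Pa_def PK sf_0 sfK)
    fix i assume "Suc m \<le> i"
    then show "\<beta> i = 0" using Pvars[of "\<beta>(m := g)" i] \<open>Pa \<beta> \<noteq> 0\<close> by (simp add: Pa_def split: if_splits)
  qed
  obtain \<alpha> where a: "P \<alpha> \<noteq> 0" "\<alpha> m = g" using lead by blast
  have "Pa (\<alpha>(m := 0)) \<noteq> 0" using a by (simp add: Pa_def fun_upd_idem)
  then have nz: "mpoly_nonzero Pa" by (auto simp: mpoly_nonzero_def)
  have deg: "\<forall>\<beta>. Pa \<beta> \<noteq> 0 \<longrightarrow> \<beta> m < g" using gpos by (simp add: Pa_def)
  have "mpeval (Suc m) Pa u = A"
  proof -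
    have "mpeval (Suc m) Pa u = (\<Sum>\<beta>\<in>{\<beta>. Pa \<beta> \<noteq> 0}. Pa \<beta> * (mono m \<beta> * u m ^ \<beta> m))" by (rule mpeval_u)
    also have "\<dots> = (\<Sum>\<alpha>\<in>{\<alpha>\<in>S0. \<alpha> m = g}. P \<alpha> * mono m \<alpha>)"
    proof (rule sum.reindex_bij_witness[where i = "\<lambda>\<alpha>. \<alpha>(m := 0)" and j = "\<lambda>\<beta>. \<beta>(m := g)"])
      fix \<beta> assume b: "\<beta> \<in> {\<beta>. Pa \<beta> \<noteq> 0}"
      then have "\<beta> m = 0" by (simp add: Pa_def split: if_splits)
      then show "(\<beta>(m := g))(m := 0) = \<beta>" by (auto simp: fun_eq_iff)
      show "\<beta>(m := g) \<in> {\<alpha>\<in>S0. \<alpha> m = g}" using b by (simp add: Pa_def S0_def split: if_splits)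
      have "mono m (\<beta>(m := g)) = mono m \<beta>" by (rule mono_cong) auto
      then show "P (\<beta>(m := g)) * mono m (\<beta>(m := g)) = Pa \<beta> * (mono m \<beta> * u m ^ \<beta> m)"
        using \<open>\<beta> m = 0\<close> by (simp add: Pa_def)
    next
      fix \<alpha> assume a: "\<alpha> \<in> {\<alpha>\<in>S0. \<alpha> m = g}"
      then show "(\<alpha>(m := 0))(m := g) = \<alpha>" by (auto simp: fun_eq_iff)
      show "\<alpha>(m := 0) \<in> {\<beta>. Pa \<beta> \<noteq> 0}" using a by (simp add: Pa_def S0_def fun_upd_idem)
    qed
    finally show ?thesis by (simp add: A_def Ak_def)
  qed
  then show ?thesis using minimal_u[OF poly nz deg] by simp
qed

lemma reduce:
  "k < g + j \<Longrightarrow> f \<in> boxn m F \<Longrightarrow> A ^ j * (mono m f * u m ^ k) \<in> spn K (G (F + j * e))"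
proof (induction k arbitrary: j f F rule: less_induct)
  case (less k)
  show ?case
  proof (cases "k < g")
    case True
    have "A ^ j \<in> spn K (Hp (j * e))" unfolding A_def by (intro spnHp_power Ak_spn)
    moreover have "mono m f * u m ^ k \<in> spn K {mono m f * u m ^ k}" by (simp add: spn_base)
    ultimately show ?thesis
    proof (rule spn_prod2[rotated])
      fix a b assume "a \<in> Hp (j * e)" "b \<in> {mono m f * u m ^ k}"
      then obtain f' where f': "a = mono m f'" "f' \<in> boxn m (j * e)" "b = mono m f * u m ^ k"
        unfolding Hp_def by blast
      have "a * b = mono m (\<lambda>i. f' i + f i) * u m ^ k" using f' by (simp add: mono_add algebra_simps)
      moreover have "(\<lambda>i. f' i + f i) \<in> boxn m (j * e + F)" using f' less.prems by (intro boxn_add)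
      ultimately show "a * b \<in> G (F + j * e)" using G_I True by (simp add: add.commute)
    qed
  next
    case False
    then obtain j' where j: "j = Suc j'" using less.prems(1) by (cases j) auto
    have eq: "A ^ j * (mono m f * u m ^ k)
       = - (\<Sum>i<g. (A ^ j' * u m ^ (k - g + i)) * (Ak i * mono m f))"
    proof -
      have "A ^ j * (mono m f * u m ^ k) = A ^ j' * mono m f * u m ^ (k - g) * (A * u m ^ g)"
        using False by (simp add: j algebra_simps power_add[symmetric])
      also have "\<dots> = - (\<Sum>i<g. A ^ j' * mono m f * u m ^ (k - g) * (Ak i * u m ^ i))"
        unfolding A_def P_decomp by (simp add: sum_distrib_left)
      also have "\<dots> = - (\<Sum>i<g. (A ^ j' * u m ^ (k - g + i)) * (Ak i * mono m f))"
        by (simp add: power_add algebra_simps)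
      finally show ?thesis .
    qed
    have "(A ^ j' * u m ^ (k - g + i)) * (Ak i * mono m f) \<in> spn K (G (F + j * e))" if "i < g" for i
    proof (rule spn_mult_closed)
      have "Ak i * mono m f \<in> spn K (Hp (e + F))"
      proof (rule spn_prod2[OF _ Ak_spn, of "{mono m f}"])
        fix a b assume "a \<in> Hp e" "b \<in> {mono m f}"
        then show "a * b \<in> Hp (e + F)" using Hp_mult[of a e b F] less.prems unfolding Hp_def by blast
      qed (simp add: spn_base)
      then show "Ak i * mono m f \<in> spn K (Hp (e + F))" .
    next
      fix h assume "h \<in> Hp (e + F)"
      then obtain f'' where h: "h = mono m f''" "f'' \<in> boxn m (e + F)" unfolding Hp_def by blast
      have lt: "k - g + i < k" using that False by simp
      have lt2: "k - g + i < g + j'" using that False less.prems(1) j by simp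
      have "A ^ j' * (mono m f'' * u m ^ (k - g + i)) \<in> spn K (G (e + F + j' * e))"
        using less.IH[OF lt lt2 h(2)] .
      moreover have "e + F + j' * e = F + j * e" by (simp add: j)
      ultimately show "A ^ j' * u m ^ (k - g + i) * h \<in> spn K (G (F + j * e))"
        using h by (simp add: algebra_simps)
    qed
    then show ?thesis unfolding eq by (intro spn_uminus sfK spn_sum) auto
  qed
qed

lemma H_to_G: "x \<in> spn K (H N) \<Longrightarrow> A ^ Suc N * x \<in> spn K (G (N + Suc N * e))"
proof (rule spn_mult_closed)
  fix h assume "h \<in> H N"
  then obtain f k where h: "h = mono m f * u m ^ k" "f \<in> boxn m N" "k \<le> N" unfolding H_def by blast
  then show "A ^ Suc N * h \<in> spn K (G (N + Suc N * e))" using reduce[of k "Suc N" f N] by simp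
qed

end


lemma pow_div_factor:
  fixes p q :: "'a::field"
  assumes "q \<noteq> 0" "a \<le> d"
  shows "q ^ (d - a) * p ^ a = q ^ d * (p / q) ^ a"
proof -
  have "q ^ d = q ^ (d - a) * q ^ a" using assms(2) by (simp add: power_add[symmetric])
  then show ?thesis using assms(1) by (simp add: power_divide)
qed

lemma card_arith:
  fixes g C d N0 m e N M :: nat
  assumes "C = (Suc m * N0 + 1) * (e + 1)" "d = g * C ^ m" "N = Suc m * (d * N0)" "M = N + Suc N * e"
  shows "g * Suc M ^ m < Suc d ^ Suc m"
proof -
  have sM: "Suc M = Suc N * Suc e" using assms(4) by simp
  have "Suc N \<le> Suc d * (Suc m * N0 + 1)" using assms(3) by (simp add: algebra_simps)
  then have "Suc N * Suc e \<le> Suc d * (Suc m * N0 + 1) * Suc e" by (rule mult_le_mono1)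
  then have "Suc M \<le> Suc d * C" unfolding sM assms(1) by (simp only: mult.assoc Suc_eq_plus1)
  then have "Suc M ^ m \<le> (Suc d * C) ^ m" by (rule power_mono) simp
  then have "g * Suc M ^ m \<le> g * (Suc d * C) ^ m" by simp
  also have "\<dots> = (g * C ^ m) * Suc d ^ m" by (simp only: power_mult_distrib ac_simps)
  also have "\<dots> = d * Suc d ^ m" using assms(2) by simp
  also have "\<dots> < Suc d * Suc d ^ m" by simp
  finally show ?thesis by simp
qed

context dsetup begin

lemma dep:
  assumes xs: "set xs \<subseteq> E" and len: "Suc m \<le> length xs"
  shows "\<not> alg_indep K xs"
proof
  assume ai: "alg_indep K xs"
  have zE: "xs ! j \<in> E" if "j < Suc m" for j using xs len that nth_mem[of j xs] by auto
  have "\<forall>j<Suc m. \<exists>p q. p \<in> R \<and> q \<in> R \<and> q \<noteq> 0 \<and> xs ! j = p / q" using zE unfolding E_def by blast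
  then obtain pf qf where pq: "\<And>j. j < Suc m \<Longrightarrow> pf j \<in> R \<and> qf j \<in> R \<and> qf j \<noteq> 0 \<and> xs ! j = pf j / qf j"
    by metis
  have "\<forall>j<Suc m. \<exists>N. pf j \<in> spn K (H N) \<and> qf j \<in> spn K (H N)"
  proof (intro allI impI)
    fix j assume "j < Suc m"
    then obtain N1 N2 where "pf j \<in> spn K (H N1)" "qf j \<in> spn K (H N2)" using pq R_span by blast
    then show "\<exists>N. pf j \<in> spn K (H N) \<and> qf j \<in> spn K (H N)"
      using spnH_mono[of N1 "N1 + N2" "pf j"] spnH_mono[of N2 "N1 + N2" "qf j"] by auto
  qed
  then obtain Nf where Nf: "\<And>j. j < Suc m \<Longrightarrow> pf j \<in> spn K (H (Nf j)) \<and> qf j \<in> spn K (H (Nf j))"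
    by metis
  define N0 where "N0 = (\<Sum>j<Suc m. Nf j)"
  have pqN0: "pf j \<in> spn K (H N0) \<and> qf j \<in> spn K (H N0)" if j: "j < Suc m" for j
  proof -
    have "Nf j \<le> N0" unfolding N0_def using j by (intro member_le_sum) auto
    then show ?thesis using Nf[OF j] spnH_mono by blast
  qed
  define C where "C = (Suc m * N0 + 1) * (e + 1)"
  define d where "d = g * C ^ m"
  define N where "N = Suc m * (d * N0)"
  define M where "M = N + Suc N * e"
  define I where "I = boxn (Suc m) d"
  define w where "w \<alpha> = A ^ Suc N * (\<Prod>j<Suc m. qf j ^ (d - \<alpha> j) * pf j ^ \<alpha> j)" for \<alpha>
  have wG: "w \<alpha> \<in> spn K (G M)" if "\<alpha> \<in> I" for \<alpha>
  proof -
    have ad: "\<And>j. j < Suc m \<Longrightarrow> \<alpha> j \<le> d" using that by (auto simp: I_def boxn_def)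
    have "(\<Prod>j<Suc m. qf j ^ (d - \<alpha> j) * pf j ^ \<alpha> j) \<in> spn K (H (card {..<Suc m} * (d * N0)))"
    proof (rule spnH_prod)
      fix j assume "j \<in> {..<Suc m}"
      then have j: "j < Suc m" by simp
      have "qf j ^ (d - \<alpha> j) * pf j ^ \<alpha> j \<in> spn K (H ((d - \<alpha> j) * N0 + \<alpha> j * N0))"
        using pqN0[OF j] by (intro spnH_mult spnH_power) auto
      moreover have "(d - \<alpha> j) * N0 + \<alpha> j * N0 = d * N0" using ad[OF j] by (simp add: add_mult_distrib[symmetric])
      ultimately show "qf j ^ (d - \<alpha> j) * pf j ^ \<alpha> j \<in> spn K (H (d * N0))" by simp
    qed simp
    then have "(\<Prod>j<Suc m. qf j ^ (d - \<alpha> j) * pf j ^ \<alpha> j) \<in> spn K (H N)" by (simp add: N_def)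
    from H_to_G[OF this] show ?thesis by (simp add: w_def M_def)
  qed
  have cardG: "card (G M) < card I"
  proof -
    have "card (G M) \<le> g * Suc M ^ m" by (rule G_card)
    also have "\<dots> < Suc d ^ Suc m" by (rule card_arith[OF C_def d_def N_def M_def])
    also have "\<dots> = card I" by (simp add: I_def card_boxn)
    finally show ?thesis .
  qed
  obtain c where c: "\<forall>\<alpha>\<in>I. c \<alpha> \<in> K" "\<exists>\<alpha>\<in>I. c \<alpha> \<noteq> 0" "(\<Sum>\<alpha>\<in>I. c \<alpha> * w \<alpha>) = 0"
    using steinitz[OF sfK G_fin[of M], of I w] finite_boxn cardG wG unfolding I_def by blast
  define Z where "Z = A ^ Suc N * (\<Prod>j<Suc m. qf j ^ d)"
  have Znz: "Z \<noteq> 0" using A_nz pq by (simp add: Z_def)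
  have wZ: "w \<alpha> = Z * (\<Prod>j<Suc m. (xs ! j) ^ \<alpha> j)" if "\<alpha> \<in> I" for \<alpha>
  proof -
    have "(\<Prod>j<Suc m. qf j ^ (d - \<alpha> j) * pf j ^ \<alpha> j) = (\<Prod>j<Suc m. qf j ^ d * (xs ! j) ^ \<alpha> j)"
    proof (rule prod.cong)
      fix j assume "j \<in> {..<Suc m}"
      then have j: "j < Suc m" by simp
      have "\<alpha> j \<le> d" using that j by (auto simp: I_def boxn_def)
      then show "qf j ^ (d - \<alpha> j) * pf j ^ \<alpha> j = qf j ^ d * (xs ! j) ^ \<alpha> j"
        using pq[OF j] pow_div_factor[of "qf j" "\<alpha> j" d "pf j"] by simp
    qed simp
    then show ?thesis by (simp add: w_def Z_def prod.distrib)
  qed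
  have "Z * (\<Sum>\<alpha>\<in>I. c \<alpha> * (\<Prod>j<Suc m. (xs ! j) ^ \<alpha> j)) = (\<Sum>\<alpha>\<in>I. c \<alpha> * w \<alpha>)"
    by (simp add: sum_distrib_left wZ algebra_simps)
  then have Ssum: "(\<Sum>\<alpha>\<in>I. c \<alpha> * (\<Prod>j<Suc m. (xs ! j) ^ \<alpha> j)) = 0" using c(3) Znz by simp
  define c' where "c' \<beta> = (if \<beta> \<in> I then c \<beta> else 0)" for \<beta>
  have fI: "finite I" by (simp add: I_def finite_boxn)
  have supp: "{\<beta>. c' \<beta> \<noteq> 0} \<subseteq> I" by (auto simp: c'_def split: if_splits)
  have poly: "is_mpoly K (length xs) c'"
    unfolding is_mpoly_def
  proof (intro conjI allI impI)
    show "finite {\<beta>. c' \<beta> \<noteq> 0}" using supp fI by (rule finite_subset)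
    fix \<beta> assume b: "c' \<beta> \<noteq> 0"
    then show "c' \<beta> \<in> K" using c(1) by (auto simp: c'_def split: if_splits)
    fix i assume "length xs \<le> i"
    then show "\<beta> i = 0" using b len by (auto simp: c'_def I_def boxn_def split: if_splits)
  qed
  have nz: "mpoly_nonzero c'" using c(2) by (auto simp: mpoly_nonzero_def c'_def)
  have "mpeval (length xs) c' (\<lambda>i. xs ! i) = (\<Sum>\<beta>\<in>I. c' \<beta> * (\<Prod>i<length xs. (xs ! i) ^ \<beta> i))"
    unfolding mpeval_def by (rule sum.mono_neutral_left[OF fI supp]) auto
  also have "\<dots> = (\<Sum>\<alpha>\<in>I. c \<alpha> * (\<Prod>j<Suc m. (xs ! j) ^ \<alpha> j))"
  proof (rule sum.cong)
    fix \<beta> assume b: "\<beta> \<in> I"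
    have "(\<Prod>i<length xs. (xs ! i) ^ \<beta> i) = (\<Prod>j<Suc m. (xs ! j) ^ \<beta> j)"
      using b len by (intro prod.mono_neutral_right) (auto simp: I_def boxn_def)
    then show "c' \<beta> * (\<Prod>i<length xs. (xs ! i) ^ \<beta> i) = c \<beta> * (\<Prod>j<Suc m. (xs ! j) ^ \<beta> j)"
      using b by (simp add: c'_def)
  qed simp
  also have "\<dots> = 0" by (rule Ssum)
  finally show False using ai poly nz by (auto simp: alg_indep_def)
qed

lemma trdeg_E: "trdeg K E \<le> enat m"
  unfolding trdeg_def
proof (rule Sup_least)
  fix x assume "x \<in> {enat (length xs) |xs. set xs \<subseteq> E \<and> alg_indep K xs}"
  then obtain xs where "x = enat (length xs)" "set xs \<subseteq> E" "alg_indep K xs" by blast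
  then show "x \<le> enat m" using dep[of xs] by (cases "Suc m \<le> length xs") auto
qed

lemma exists_E: "\<exists>E. diff_subfield D E \<and> K \<subseteq> E \<and> y \<in> E \<and> trdeg K E \<le> enat m"
  using diff_subfield_E K_E y_E trdeg_E by blast

end


lemma prod_unit: "(i::nat) < n \<Longrightarrow> (\<Prod>k<n. x k ^ (if k = i then 1 else 0)) = (x i :: 'a::comm_monoid_mult)"
proof -
  assume i: "i < n"
  have "(\<Prod>k<n. x k ^ (if k = i then 1 else 0)) = (\<Prod>k<n. if k = i then x k else 1)"
    by (rule prod.cong) auto
  also have "\<dots> = x i" by (subst prod.delta) (use i in simp_all)
  finally show ?thesis .
qed

lemma mpeval_cong: "(\<And>i. i < n \<Longrightarrow> x i = x' i) \<Longrightarrow> mpeval n c x = mpeval n c x'"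
  unfolding mpeval_def by (intro sum.cong refl arg_cong2[where f = "(*)"] prod.cong) auto

lemma forward:
  fixes D :: "'a::field_char_0 \<Rightarrow> 'a"
  assumes cl: "r_diff_closed D r K" and sfK: "subfield K"
    and dE: "diff_subfield D E" and KE: "K \<subset> E" and tr: "trdeg K E \<le> enat r"
  shows False
proof -
  obtain y where y: "y \<in> E" "y \<notin> K" using KE by blast
  define xs where "xs = map (\<lambda>i. (D^^i) y) [0..<Suc r]"
  have DE: "(D^^i) y \<in> E" for i
    by (induction i) (use y dE in \<open>auto simp: diff_subfield_def\<close>)
  have sx: "set xs \<subseteq> E" using DE by (auto simp: xs_def)
  have lx: "length xs = Suc r" by (simp add: xs_def)
  have nth: "i < Suc r \<Longrightarrow> xs ! i = (D^^i) y" for i by (simp add: xs_def del: upt_Suc)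
  have "\<not> alg_indep K xs"
  proof
    assume "alg_indep K xs"
    then have "enat (length xs) \<le> trdeg K E" unfolding trdeg_def using sx by (intro Sup_upper) blast
    then have "enat (Suc r) \<le> enat r" using tr lx order.trans by metis
    then show False by simp
  qed
  then consider (nd) "\<not> distinct xs"
    | (dep) c where "is_mpoly K (Suc r) c" "mpoly_nonzero c" "mpeval (Suc r) c (\<lambda>i. xs ! i) = 0"
  proof -
    have "\<not> distinct xs \<or> (\<exists>c. is_mpoly K (Suc r) c \<and> mpoly_nonzero c \<and> mpeval (Suc r) c (\<lambda>i. xs ! i) = 0)"
      using \<open>\<not> alg_indep K xs\<close> unfolding alg_indep_def lx by auto
    then show thesis using that by blast
  qed
  then show False
  proof cases
    case dep
    have "mpeval (Suc r) c (\<lambda>i. (D^^i) y) = mpeval (Suc r) c (\<lambda>i. xs ! i)"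
      by (rule mpeval_cong) (simp add: nth)
    then have "mpeval (Suc r) c (\<lambda>i. (D^^i) y) = 0" using dep(3) by simp
    then have "y \<in> K" using cl dep(1,2) by (auto simp: r_diff_closed_def)
    then show False using y by simp
  next
    case nd
    then obtain i j where ij: "i < Suc r" "j < Suc r" "i \<noteq> j" "xs ! i = xs ! j"
      unfolding distinct_conv_nth lx by blast
    define ei where "ei = (\<lambda>k::nat. if k = i then 1 else (0::nat))"
    define ej where "ej = (\<lambda>k::nat. if k = j then 1 else (0::nat))"
    have neq: "ei \<noteq> ej" using ij by (auto simp: ei_def ej_def fun_eq_iff)
    define c where "c \<alpha> = (if \<alpha> = ei then 1 else if \<alpha> = ej then -1 else (0::'a))" for \<alpha>
    have supp: "{\<alpha>. c \<alpha> \<noteq> 0} = {ei, ej}" using neq by (auto simp: c_def)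
    have poly: "is_mpoly K (Suc r) c"
      unfolding is_mpoly_def supp
    proof (intro conjI allI impI)
      fix \<alpha> assume "c \<alpha> \<noteq> 0"
      then show "c \<alpha> \<in> K" using sf_1[OF sfK] sf_uminus[OF sfK sf_1[OF sfK]] by (auto simp: c_def split: if_splits)
      fix k assume "Suc r \<le> k"
      then show "\<alpha> k = 0" using \<open>c \<alpha> \<noteq> 0\<close> ij by (auto simp: c_def ei_def ej_def split: if_splits)
    qed simp
    have nz: "mpoly_nonzero c" by (auto simp: mpoly_nonzero_def c_def intro!: exI[of _ ei])
    have ci: "c ei = 1" by (simp add: c_def)
    have cj: "c ej = -1" using neq by (simp add: c_def)
    have pi: "(\<Prod>k<Suc r. (D^^k) y ^ ei k) = (D^^i) y"
      unfolding ei_def by (rule prod_unit) (rule ij(1))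
    have pj: "(\<Prod>k<Suc r. (D^^k) y ^ ej k) = (D^^j) y"
      unfolding ej_def by (rule prod_unit) (rule ij(2))
    have "mpeval (Suc r) c (\<lambda>k. (D^^k) y) = (\<Sum>\<alpha>\<in>{ei, ej}. c \<alpha> * (\<Prod>k<Suc r. (D^^k) y ^ \<alpha> k))"
      unfolding mpeval_def supp ..
    also have "\<dots> = c ei * (\<Prod>k<Suc r. (D^^k) y ^ ei k) + c ej * (\<Prod>k<Suc r. (D^^k) y ^ ej k)"
      using neq by simp
    also have "\<dots> = (D^^i) y - (D^^j) y" unfolding ci cj pi pj by simp
    also have "\<dots> = 0" using ij nth by simp
    finally have "y \<in> K" using cl poly nz by (auto simp: r_diff_closed_def)
    then show False using y by simp
  qed
qed

lemma backward:
  fixes D :: "'a::field_char_0 \<Rightarrow> 'a"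
  assumes der: "derivation D" and dK: "diff_subfield D K" and ncl: "\<not> r_diff_closed D r K"
  shows "\<exists>E. diff_subfield D E \<and> K \<subset> E \<and> trdeg K E \<le> enat r"
proof -
  obtain c0 y where c0: "is_mpoly K (Suc r) c0" "mpoly_nonzero c0" "mpeval (Suc r) c0 (\<lambda>i. (D^^i) y) = 0"
    and y: "y \<notin> K" using ncl unfolding r_diff_closed_def by blast
  define u where "u = (\<lambda>i. (D^^i) y)"
  define V where "V n = (\<exists>c. is_mpoly K (Suc n) c \<and> mpoly_nonzero c \<and> mpeval (Suc n) c u = 0)" for n
  have Vr: "V r" using c0 by (auto simp: V_def u_def)
  define m where "m = (LEAST n. V n)"
  have Vm: "V m" unfolding m_def by (rule LeastI[of V r, OF Vr])
  have mr: "m \<le> r" unfolding m_def by (rule Least_le[of V r, OF Vr])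
  define W where "W g = (\<exists>c. is_mpoly K (Suc m) c \<and> mpoly_nonzero c \<and> mpeval (Suc m) c u = 0 \<and> (\<forall>\<alpha>. c \<alpha> \<noteq> 0 \<longrightarrow> \<alpha> m \<le> g))" for g
  have "\<exists>g. W g"
  proof -
    obtain c where c: "is_mpoly K (Suc m) c" "mpoly_nonzero c" "mpeval (Suc m) c u = 0" using Vm V_def by blast
    have fin: "finite {\<alpha>. c \<alpha> \<noteq> 0}" using c(1) by (simp add: is_mpoly_def)
    have "\<forall>\<alpha>. c \<alpha> \<noteq> 0 \<longrightarrow> \<alpha> m \<le> (\<Sum>\<beta>\<in>{\<alpha>. c \<alpha> \<noteq> 0}. \<beta> m)"
      using fin by (auto intro: member_le_sum)
    then show ?thesis using c by (auto simp: W_def)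
  qed
  then obtain g1 where "W g1" by blast
  define g where "g = (LEAST g. W g)"
  have Wg: "W g" unfolding g_def by (rule LeastI[of W g1, OF \<open>W g1\<close>])
  then obtain P where P: "is_mpoly K (Suc m) P" "mpoly_nonzero P" "mpeval (Suc m) P u = 0"
    "\<And>\<alpha>. P \<alpha> \<noteq> 0 \<Longrightarrow> \<alpha> m \<le> g" unfolding W_def by blast
  have minimal: "mpeval (Suc m) c u \<noteq> 0" if h: "is_mpoly K (Suc m) c" "mpoly_nonzero c" "\<forall>\<alpha>. c \<alpha> \<noteq> 0 \<longrightarrow> \<alpha> m < g" for c
  proof
    assume z: "mpeval (Suc m) c u = 0"
    obtain \<alpha> where "c \<alpha> \<noteq> 0" using h(2) by (auto simp: mpoly_nonzero_def)
    then have g0: "g > 0" using h(3) by auto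
    have "\<forall>\<alpha>. c \<alpha> \<noteq> 0 \<longrightarrow> \<alpha> m \<le> g - 1" using h(3) by auto
    then have "W (g - 1)" unfolding W_def using h(1,2) z by blast
    then have "g \<le> g - 1" unfolding g_def by (rule Least_le[of W])
    then show False using g0 by simp
  qed
  have lead: "\<exists>\<alpha>. P \<alpha> \<noteq> 0 \<and> \<alpha> m = g"
  proof (rule ccontr)
    assume "\<not> ?thesis"
    then have "\<forall>\<alpha>. P \<alpha> \<noteq> 0 \<longrightarrow> \<alpha> m < g" using P(4) by (meson le_neq_implies_less)
    then show False using minimal[OF P(1,2)] P(3) by blast
  qed
  have gpos: "1 \<le> g"
  proof (rule ccontr)
    assume "\<not> 1 \<le> g"
    then have g0: "g = 0" by simp
    have am: "\<alpha> m = 0" if "P \<alpha> \<noteq> 0" for \<alpha> using P(4)[OF that] g0 by simp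
    show False
    proof (cases m)
      case 0
      define z where "z = (\<lambda>_::nat. 0::nat)"
      have "{\<alpha>. P \<alpha> \<noteq> 0} \<subseteq> {z}"
      proof
        fix \<alpha> assume a: "\<alpha> \<in> {\<alpha>. P \<alpha> \<noteq> 0}"
        have "\<alpha> i = 0" for i
        proof (cases "i = 0")
          case True then show ?thesis using am a 0 by simp
        next
          case False then show ?thesis using P(1) a 0 by (auto simp: is_mpoly_def)
        qed
        then show "\<alpha> \<in> {z}" by (auto simp: z_def fun_eq_iff)
      qed
      moreover have "{\<alpha>. P \<alpha> \<noteq> 0} \<noteq> {}" using P(2) by (auto simp: mpoly_nonzero_def)
      ultimately have supp: "{\<alpha>. P \<alpha> \<noteq> 0} = {z}" by blast
      have "mpeval (Suc m) P u = P z" unfolding mpeval_def supp by (simp add: z_def)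
      then show False using P(3) supp by auto
    next
      case (Suc k)
      have pk: "is_mpoly K (Suc k) P"
        unfolding is_mpoly_def
      proof (intro conjI allI impI)
        show "finite {\<alpha>. P \<alpha> \<noteq> 0}" using P(1) by (simp add: is_mpoly_def)
        fix \<alpha> assume a: "P \<alpha> \<noteq> 0"
        then show "P \<alpha> \<in> K" using P(1) by (simp add: is_mpoly_def)
        fix i assume i: "Suc k \<le> i"
        show "\<alpha> i = 0"
        proof (cases "i = m")
          case True then show ?thesis using am[OF a] by simp
        next
          case False then have "Suc m \<le> i" using i Suc by simp
          then show ?thesis using P(1) a by (simp add: is_mpoly_def)
        qed
      qed
      have "mpeval (Suc k) P u = mpeval (Suc m) P u"
        unfolding mpeval_def
      proof (intro sum.cong refl arg_cong2[where f = "(*)"])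
        fix \<alpha> assume "\<alpha> \<in> {\<alpha>. P \<alpha> \<noteq> 0}"
        then have a: "\<alpha> m = 0" using am by simp
        have "(\<Prod>i<Suc m. u i ^ \<alpha> i) = (\<Prod>i<m. u i ^ \<alpha> i) * u m ^ \<alpha> m" by (rule prod.lessThan_Suc)
        also have "\<dots> = (\<Prod>i<Suc k. u i ^ \<alpha> i)" using a Suc by simp
        finally show "(\<Prod>i<Suc k. u i ^ \<alpha> i) = (\<Prod>i<Suc m. u i ^ \<alpha> i)" by simp
      qed
      then have "V k" using pk P(2,3) by (auto simp: V_def)
      then have "m \<le> k" unfolding m_def by (rule Least_le[of V])
      then show False using Suc by simp
    qed
  qed
  have P3: "mpeval (Suc m) P (\<lambda>i. (D^^i) y) = 0" using P(3) by (simp add: u_def)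
  have min': "\<And>c. is_mpoly K (Suc m) c \<Longrightarrow> mpoly_nonzero c \<Longrightarrow> (\<forall>\<alpha>. c \<alpha> \<noteq> 0 \<longrightarrow> \<alpha> m < g)
       \<Longrightarrow> mpeval (Suc m) c (\<lambda>i. (D^^i) y) \<noteq> 0" using minimal unfolding u_def by blast
  interpret dsetup D K y m g P
    unfolding dsetup_def using der dK P(1) P3 P(4) lead gpos min' by blast
  obtain E where E: "diff_subfield D E" "K \<subseteq> E" "y \<in> E" "trdeg K E \<le> enat m" using exists_E by blast
  have "trdeg K E \<le> enat r" using E(4) mr order.trans by fastforce
  then show ?thesis using E y by blast
qed

theorem mainTheorem16:
  fixes D :: "'a::field_char_0 \<Rightarrow> 'a" and K :: "'a set" and r :: nat
  assumes "derivation D"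
    and "diff_subfield D K"
  shows "r_diff_closed D r K \<longleftrightarrow>
    \<not> (\<exists>E. diff_subfield D E \<and> K \<subset> E \<and> trdeg K E \<le> enat r)"
proof
  assume "r_diff_closed D r K"
  then show "\<not> (\<exists>E. diff_subfield D E \<and> K \<subset> E \<and> trdeg K E \<le> enat r)"
    using forward[of D r K] assms(2) by (auto simp: diff_subfield_def)
next
  assume "\<not> (\<exists>E. diff_subfield D E \<and> K \<subset> E \<and> trdeg K E \<le> enat r)"
  then show "r_diff_closed D r K" using backward[OF assms] by blast
qed


end
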